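(* Let $C\in\mathbb{F}_p^n$, $C\ne0$, and $(d_1,\dots,d_n)\in\mathbb{F}_p^n$ satisfy $\sum_jM_jC_j=0$, $\Omega^M_jC=d_jC$ for $j=1,\dots,n-1$, and $d_n=0$. Then $\sum_{j=1}^nd_j=\sum_{j=1}^nM_j$ in $\mathbb{F}_p$.
   Context: $p$ is an odd prime, $n\ge2$, and $M_1,\dots,M_n$ are integers with $1\le M_i\le p-1$, viewed in $\mathbb{F}_p$. For $j\ne l$, $\Omega^M_{jl}$ is the $n\times n$ matrix over $\mathbb{F}_p$ with only nonzero entries $(\Omega^M_{jl})_{jj}=M_l$, $(\Omega^M_{jl})_{jl}=-M_l$, $(\Omega^M_{jl})_{lj}=-M_j$, $(\Omega^M_{jl})_{ll}=M_j$; $\Omega^M_j=\sum_{l=j+1}^n\Omega^M_{jl}$; $C$ is a column vector. *)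

theory Defs
  imports Main "HOL-Number_Theory.Cong"
begin

text \<open>Elements of F_p are represented by integers, equalities in F_p by congruences mod p.
Indices run over 1..n.  Entry (a,b) of the matrix Omega^M_{jl} (for j different from l).\<close>

definition OmegaM_jl :: "(nat \<Rightarrow> int) \<Rightarrow> nat \<Rightarrow> nat \<Rightarrow> nat \<Rightarrow> nat \<Rightarrow> int" where
  "OmegaM_jl M j l a b =
     (if a = j \<and> b = j then M l
      else if a = j \<and> b = l then - M l
      else if a = l \<and> b = j then - M j
      else if a = l \<and> b = l then M j
      else 0)"

definition OmegaM_j :: "(nat \<Rightarrow> int) \<Rightarrow> nat \<Rightarrow> nat \<Rightarrow> nat \<Rightarrow> nat \<Rightarrow> int" where
  "OmegaM_j M n j a b = (\<Sum>l = j+1..n. OmegaM_jl M j l a b)"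

end

theory Submission
  imports Defs
begin

lemma inner:
  assumes "j \<noteq> l" "j \<in> {1..n}" "l \<in> {1..n}"
  shows "(\<Sum>b = 1..n. OmegaM_jl M j l a b * C b) =
    (if a = j then M l * (C j - C l) else if a = l then M j * (C l - C j) else 0)"
proof -
  have "\<And>b. OmegaM_jl M j l a b * C b =
     (if b = j then (if a = j then M l else if a = l then - M j else 0) * C j else 0) +
     (if b = l then (if a = j then - M l else if a = l then M j else 0) * C l else 0)"
    using assms(1) unfolding OmegaM_jl_def by auto
  then have "(\<Sum>b = 1..n. OmegaM_jl M j l a b * C b) =
     (\<Sum>b = 1..n. (if b = j then (if a = j then M l else if a = l then - M j else 0) * C j else 0)) +
     (\<Sum>b = 1..n. (if b = l then (if a = j then - M l else if a = l then M j else 0) * C l else 0))"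
    by (simp add: sum.distrib)
  also have "\<dots> = (if a = j then M l else if a = l then - M j else 0) * C j +
       (if a = j then - M l else if a = l then M j else 0) * C l"
    using assms(2,3) by (simp add: sum.delta)
  finally show ?thesis using assms(1) by (auto simp: algebra_simps)
qed

lemma row:
  assumes "1 \<le> j" "j < n" "a \<in> {1..n}"
  shows "(\<Sum>b = 1..n. OmegaM_j M n j a b * C b) =
    (if a < j then 0 else if a = j then (\<Sum>l = j+1..n. M l * (C j - C l)) else M j * (C a - C j))"
proof -
  have "(\<Sum>b = 1..n. OmegaM_j M n j a b * C b) = (\<Sum>l = j+1..n. \<Sum>b = 1..n. OmegaM_jl M j l a b * C b)"
    unfolding OmegaM_j_def by (simp add: sum_distrib_right) (rule sum.swap)
  also have "\<dots> = (\<Sum>l = j+1..n. (if a = j then M l * (C j - C l) else if a = l then M j * (C l - C j) else 0))"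
    proof (rule sum.cong[OF refl])
    fix l assume "l \<in> {j+1..n}"
    then show "(\<Sum>b = 1..n. OmegaM_jl M j l a b * C b) = (if a = j then M l * (C j - C l) else if a = l then M j * (C l - C j) else 0)"
      using assms by (intro inner) auto
  qed
  also have "\<dots> = (if a < j then 0 else if a = j then (\<Sum>l = j+1..n. M l * (C j - C l)) else M j * (C a - C j))"
  proof (cases "a < j")
    case True then show ?thesis by simp
  next
    case False
    show ?thesis
    proof (cases "a = j")
      case True then show ?thesis by simp
    next
      case F: False
      have "(\<Sum>l = j+1..n. (if a = j then M l * (C j - C l) else if a = l then M j * (C l - C j) else 0))
          = (\<Sum>l = j+1..n. (if a = l then M j * (C l - C j) else 0))" using F by simp
      also have "\<dots> = M j * (C a - C j)" using F False assms by (simp add: sum.delta)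
      finally show ?thesis using F False by simp
    qed
  qed
  finally show ?thesis .
qed


lemma split_sum:
  assumes "1 \<le> k" "k \<le> n"
  shows "sum (g::nat \<Rightarrow> int) {1..n} = sum g {1..<k} + sum g {k..n}"
proof -
  have "{1..n} = {1..<k} \<union> {k..n}" using assms by auto
  then show ?thesis by (simp add: sum.union_disjoint ivl_disj_int)
qed

theorem corollary5p4:
  fixes p :: int and n :: nat and M C d :: "nat \<Rightarrow> int"
  assumes "prime p" and "odd p" and "n \<ge> 2"
    and "\<forall>i\<in>{1..n}. 1 \<le> M i \<and> M i \<le> p - 1"
    and "\<exists>i\<in>{1..n}. \<not> [C i = 0] (mod p)"
    and "[(\<Sum>j = 1..n. M j * C j) = 0] (mod p)"
    and "\<forall>j\<in>{1..n-1}. \<forall>a\<in>{1..n}.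
           [(\<Sum>b = 1..n. OmegaM_j M n j a b * C b) = d j * C a] (mod p)"
    and "[d n = 0] (mod p)"
  shows "[(\<Sum>j = 1..n. d j) = (\<Sum>j = 1..n. M j)] (mod p)"
proof -
  note pr = assms(1)
  define k where "k = (LEAST i. i \<in> {1..n} \<and> \<not> p dvd C i)"
  have ex: "\<exists>i. i \<in> {1..n} \<and> \<not> p dvd C i" using assms(5) by (auto simp: cong_0_iff)
  have Pk: "k \<in> {1..n} \<and> \<not> p dvd C k" unfolding k_def using LeastI_ex[OF ex] .
  have below: "p dvd C i" if "1 \<le> i" "i < k" for i
  proof -
    have "i \<in> {1..n}" using that Pk by auto
    then show ?thesis using not_less_Least[of i "\<lambda>i. i \<in> {1..n} \<and> \<not> p dvd C i"] that
      unfolding k_def by auto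
  qed
  have k1: "1 \<le> k" and kn: "k \<le> n" and Ck: "\<not> p dvd C k" using Pk by auto
  have rowc: "p dvd ((if a < j then 0 else if a = j then (\<Sum>l = j+1..n. M l * (C j - C l)) else M j * (C a - C j)) - d j * C a)"
    if "1 \<le> j" "j < n" "a \<in> {1..n}" for j a
  proof -
    have "j \<in> {1..n-1}" using that by auto
    then have "[(\<Sum>b = 1..n. OmegaM_j M n j a b * C b) = d j * C a] (mod p)" using assms(7) that(3) by blast
    then show ?thesis using row[OF that, of M C] by (simp add: cong_iff_dvd_diff)
  qed
  have key: "p dvd (\<Sum>l = k..n. M l * C l)"
  proof -
    have "p dvd (\<Sum>l = 1..n. M l * C l)" using assms(6) by (simp add: cong_0_iff)
    moreover have "p dvd (\<Sum>l = 1..<k. M l * C l)" by (rule dvd_sum) (use below in auto)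
    moreover have "(\<Sum>l = k..n. M l * C l) = (\<Sum>l = 1..n. M l * C l) - (\<Sum>l = 1..<k. M l * C l)"
      using split_sum[OF k1 kn, of "\<lambda>l. M l * C l"] by simp
    ultimately show ?thesis by (simp add: dvd_diff)
  qed
  define f where "f j = (if j < k then M j else if j = k then (\<Sum>l = k..n. M l) else 0)" for j
  have A: "p dvd (d j - f j)" if jin: "j \<in> {1..n}" for j
  proof -
    consider "j < k" | "k < j" "j < n" | "k < j" "j = n" | "j = k" "k < n" | "j = k" "k = n"
    proof -
      from jin kn have "j<k \<or> (k<j \<and> j<n) \<or> (k<j \<and> j=n) \<or> (j=k \<and> k<n) \<or> (j=k \<and> k=n)" by auto
      then show ?thesis using that by blast
    qed
    then show ?thesis
    proof cases
      case 1
      have "p dvd (M j * (C k - C j) - d j * C k)" using rowc[of j k] 1 that Pk by auto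
      moreover have "p dvd M j * C j" using below[of j] 1 that by auto
      moreover have "(M j - d j) * C k = (M j * (C k - C j) - d j * C k) + M j * C j" by (simp add: algebra_simps)
      ultimately have "p dvd (M j - d j) * C k" by (metis dvd_add)
      then have "p dvd (M j - d j)" using Ck pr by (simp add: prime_dvd_mult_iff)
      then show ?thesis using 1 f_def by (simp add: dvd_diff_commute)
    next
      case 2
      have "p dvd (0 - d j * C k)" using rowc[of j k] 2 that Pk by auto
      then have "p dvd d j * C k" by simp
      then have "p dvd d j" using Ck pr by (simp add: prime_dvd_mult_iff)
      then show ?thesis using 2 f_def by simp
    next
      case 3
      then show ?thesis using assms(8) f_def by (simp add: cong_0_iff)
    next
      case 4
      have r: "p dvd ((\<Sum>l = k+1..n. M l * (C k - C l)) - d k * C k)" using rowc[of k k] 4 Pk by auto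
      have s1: "(\<Sum>l = k..n. M l) = M k + (\<Sum>l = k+1..n. M l)" using kn by (simp add: sum.atLeast_Suc_atMost)
      have s2: "(\<Sum>l = k..n. M l * C l) = M k * C k + (\<Sum>l = k+1..n. M l * C l)" using kn by (simp add: sum.atLeast_Suc_atMost)
      have s3: "(\<Sum>l = k+1..n. M l * (C k - C l)) = (\<Sum>l = k+1..n. M l) * C k - (\<Sum>l = k+1..n. M l * C l)"
        by (simp add: right_diff_distrib sum_subtractf sum_distrib_right)
      have "((\<Sum>l = k..n. M l) - d k) * C k = ((\<Sum>l = k+1..n. M l * (C k - C l)) - d k * C k) + (\<Sum>l = k..n. M l * C l)"
        unfolding s1 s2 s3 by (simp add: algebra_simps)
      then have "p dvd ((\<Sum>l = k..n. M l) - d k) * C k" using r key by simp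
      then have "p dvd ((\<Sum>l = k..n. M l) - d k)" using Ck pr by (simp add: prime_dvd_mult_iff)
      then show ?thesis using 4 f_def by (simp add: dvd_diff_commute)
    next
      case 5
      have "p dvd M n * C n" using key 5 by simp
      then have "p dvd M n" using Ck 5 pr by (simp add: prime_dvd_mult_iff)
      moreover have "p dvd d n" using assms(8) by (simp add: cong_0_iff)
      ultimately show ?thesis using 5 f_def by simp
    qed
  qed
  have B: "(\<Sum>j = 1..n. f j) = (\<Sum>j = 1..n. M j)"
  proof -
    have "(\<Sum>j = 1..n. f j) = (\<Sum>j = 1..<k. f j) + (\<Sum>j = k..n. f j)" by (rule split_sum[OF k1 kn])
    also have "(\<Sum>j = 1..<k. f j) = (\<Sum>j = 1..<k. M j)" by (rule sum.cong) (auto simp: f_def)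
    also have "(\<Sum>j = k..n. f j) = f k + (\<Sum>j = k+1..n. f j)" using kn by (simp add: sum.atLeast_Suc_atMost)
    also have "(\<Sum>j = k+1..n. f j) = 0" by (rule sum.neutral) (auto simp: f_def)
    also have "f k = (\<Sum>j = k..n. M j)" by (simp add: f_def)
    finally show ?thesis using split_sum[OF k1 kn, of M] by simp
  qed
  have "p dvd (\<Sum>j = 1..n. d j - f j)" by (rule dvd_sum) (use A in auto)
  then show ?thesis using B by (simp add: cong_iff_dvd_diff sum_subtractf)
qed

end
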